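(* Let $s\ge1$, $0<r_1<r_2<\cdots<r_s<1$ and $\varepsilon>0$. Then there is $n_0$ such that for every $n\ge n_0$ for which all $r_in$ are integers, there exist self-orthogonal additive codes $C_s\subseteq C_{s-1}\subseteq\cdots\subseteq C_1\subseteq\mathbb{F}_4^n$ with $|C_i|=2^{n-r_in}$ such that, for each $i$, every vector of $C_i^\perp\setminus C_i$ has weight at least $\left(H_4^{-1}\!\left(\frac{1-r_i}{2}\right)-\varepsilon\right)n$. That is, there are nested stabilizer quantum codes $Q_1\subseteq Q_2\subseteq\cdots\subseteq Q_s$ with parameters $[[n,r_in,\delta_in]]$ that simultaneously (asymptotically) meet the quantum Gilbert–Varshamov bound $\delta_i\ge H_4^{-1}\!\left(\frac{1-r_i}{2}\right)$.
   Context: $\mathbb{F}_4=\{0,1,\omega,\omega^2\}$, $\omega^2=\omega+1$, $\bar x=x^2$; trace inner product $\langle u,v\rangle=\sum_i(u_i\bar v_i+\bar u_iv_i)\in\mathbb{F}_2$ on $\mathbb{F}_4^n$; additive codes are $\mathbb{F}_2$-subspaces; $C^\perp$ is the trace dual; self-orthogonal means $C\subseteq C^\perp$; weight = number of nonzero coordinates. An $[[n,k,d]]$ stabilizer code is given by a self-orthogonal additive $C$ with $|C|=2^{n-k}$ such that every vector of $C^\perp\setminus C$ has weight $\ge d$. $H_4(x)=-x\log_4\frac x3-(1-x)\log_4(1-x)$, and $H_4^{-1}$ is the inverse of its restriction to $(0,3/4]$. *)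

theory Defs
  imports "HOL-Analysis.Analysis"
begin

text \<open>The field F_4 = {0,1,w,w^2} with w^2 = w + 1.\<close>
datatype f4 = F0 | F1 | Fw | Fw2

fun f4_add :: "f4 \<Rightarrow> f4 \<Rightarrow> f4" where
  "f4_add F0 y = y"
| "f4_add x F0 = x"
| "f4_add F1 F1 = F0" | "f4_add F1 Fw = Fw2" | "f4_add F1 Fw2 = Fw"
| "f4_add Fw F1 = Fw2" | "f4_add Fw Fw = F0" | "f4_add Fw Fw2 = F1"
| "f4_add Fw2 F1 = Fw" | "f4_add Fw2 Fw = F1" | "f4_add Fw2 Fw2 = F0"

fun f4_mul :: "f4 \<Rightarrow> f4 \<Rightarrow> f4" where
  "f4_mul F0 y = F0"
| "f4_mul x F0 = F0"
| "f4_mul F1 y = y"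
| "f4_mul x F1 = x"
| "f4_mul Fw Fw = Fw2" | "f4_mul Fw Fw2 = F1"
| "f4_mul Fw2 Fw = F1" | "f4_mul Fw2 Fw2 = Fw"

text \<open>Conjugation x \<mapsto> x^2.\<close>
fun f4_conj :: "f4 \<Rightarrow> f4" where
  "f4_conj F0 = F0" | "f4_conj F1 = F1" | "f4_conj Fw = Fw2" | "f4_conj Fw2 = Fw"

text \<open>Vectors of F_4^n: functions nat \<Rightarrow> f4 vanishing (= F0) outside {..<n}.\<close>
definition vecs :: "nat \<Rightarrow> (nat \<Rightarrow> f4) set" where
  "vecs n = {v. \<forall>i\<ge>n. v i = F0}"

definition vadd :: "(nat \<Rightarrow> f4) \<Rightarrow> (nat \<Rightarrow> f4) \<Rightarrow> nat \<Rightarrow> f4" where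
  "vadd u v = (\<lambda>i. f4_add (u i) (v i))"

definition zero_vec :: "nat \<Rightarrow> f4" where
  "zero_vec = (\<lambda>i. F0)"

text \<open>Trace inner product: sum_i (u_i conj(v_i) + conj(u_i) v_i), a value in {0,1} = F_2.\<close>
definition trace_ip :: "nat \<Rightarrow> (nat \<Rightarrow> f4) \<Rightarrow> (nat \<Rightarrow> f4) \<Rightarrow> f4" where
  "trace_ip n u v = foldr f4_add
     (map (\<lambda>i. f4_add (f4_mul (u i) (f4_conj (v i))) (f4_mul (f4_conj (u i)) (v i))) [0..<n]) F0"

definition weight :: "nat \<Rightarrow> (nat \<Rightarrow> f4) \<Rightarrow> nat" where
  "weight n v = card {i. i < n \<and> v i \<noteq> F0}"

text \<open>Additive code = F_2-subspace of F_4^n (contains 0, closed under addition).\<close>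
definition additive_code :: "nat \<Rightarrow> (nat \<Rightarrow> f4) set \<Rightarrow> bool" where
  "additive_code n C \<longleftrightarrow> C \<subseteq> vecs n \<and> zero_vec \<in> C \<and> (\<forall>u\<in>C. \<forall>v\<in>C. vadd u v \<in> C)"

definition trace_dual :: "nat \<Rightarrow> (nat \<Rightarrow> f4) set \<Rightarrow> (nat \<Rightarrow> f4) set" where
  "trace_dual n C = {v \<in> vecs n. \<forall>c\<in>C. trace_ip n c v = F0}"

definition self_orthogonal :: "nat \<Rightarrow> (nat \<Rightarrow> f4) set \<Rightarrow> bool" where
  "self_orthogonal n C \<longleftrightarrow> C \<subseteq> trace_dual n C"

definition H4 :: "real \<Rightarrow> real" where
  "H4 x = - x * log 4 (x / 3) - (1 - x) * log 4 (1 - x)"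

definition H4_inv :: "real \<Rightarrow> real" where
  "H4_inv y = (THE x. 0 < x \<and> x \<le> 3/4 \<and> H4 x = y)"

end

theory Submission
  imports Defs "HOL-Real_Asymp.Real_Asymp"
begin

lemma UNIV_f4: "(UNIV :: f4 set) = {F0, F1, Fw, Fw2}"
  using f4.exhaust by auto

lemma f4_add_comm: "f4_add a b = f4_add b a"
  by (cases a; cases b; simp)
lemma f4_add_assoc: "f4_add (f4_add a b) c = f4_add a (f4_add b c)"
  by (cases a; cases b; cases c; simp)
lemma f4_add_F0r[simp]: "f4_add a F0 = a"
  by (cases a; simp)
lemma f4_add_self[simp]: "f4_add a a = F0"
  by (cases a; simp)
lemma f4_add_eq_F0_iff: "f4_add a b = F0 \<longleftrightarrow> a = b"
  by (cases a; cases b; simp)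
lemma f4_add_swap4: "f4_add (f4_add a b) (f4_add c d) = f4_add (f4_add a c) (f4_add b d)"
  by (cases a; cases b; cases c; cases d; simp)

definition tterm :: "f4 \<Rightarrow> f4 \<Rightarrow> f4" where
  "tterm a b = f4_add (f4_mul a (f4_conj b)) (f4_mul (f4_conj a) b)"

lemma tterm_add: "tterm (f4_add a a') b = f4_add (tterm a b) (tterm a' b)"
  unfolding tterm_def by (cases a; cases a'; cases b; simp)
lemma tterm_sym: "tterm a b = tterm b a"
  unfolding tterm_def by (cases a; cases b; simp)
lemma tterm_self[simp]: "tterm a a = F0"
  unfolding tterm_def by (cases a; simp)
lemma tterm_F0[simp]: "tterm F0 b = F0" "tterm b F0 = F0"
  unfolding tterm_def by (cases b; simp)+
lemma tterm_01: "tterm a b = F0 \<or> tterm a b = F1"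
  unfolding tterm_def by (cases a; cases b; simp)
lemma tterm_nondeg: "a \<noteq> F0 \<Longrightarrow> \<exists>c. tterm a c = F1"
  unfolding tterm_def
  apply (cases a)
  apply simp
  apply (rule exI[of _ Fw], simp)
  apply (rule exI[of _ F1], simp)
  apply (rule exI[of _ F1], simp)
  done

lemma foldr_f4_shift: "foldr f4_add xs a = f4_add (foldr f4_add xs F0) a"
  by (induction xs) (auto simp: f4_add_assoc)

lemma tip_0[simp]: "trace_ip 0 u v = F0"
  unfolding trace_ip_def by simp

lemma tip_Suc: "trace_ip (Suc n) u v = f4_add (trace_ip n u v) (tterm (u n) (v n))"
  unfolding trace_ip_def tterm_def
  apply simp
  apply (subst foldr_f4_shift)
  apply simp
  done

lemma tip_addL: "trace_ip n (vadd u u') v = f4_add (trace_ip n u v) (trace_ip n u' v)"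
  by (induction n) (auto simp: tip_Suc vadd_def tterm_add f4_add_swap4)

lemma tip_sym: "trace_ip n u v = trace_ip n v u"
  by (induction n) (auto simp: tip_Suc tterm_sym)

lemma tip_addR: "trace_ip n v (vadd u u') = f4_add (trace_ip n v u) (trace_ip n v u')"
  using tip_addL tip_sym by metis

lemma tip_self[simp]: "trace_ip n u u = F0"
  by (induction n) (auto simp: tip_Suc)

lemma tip_zeroL[simp]: "trace_ip n zero_vec v = F0"
  by (induction n) (auto simp: tip_Suc zero_vec_def)

lemma tip_zeroR[simp]: "trace_ip n v zero_vec = F0"
  using tip_zeroL tip_sym by metis

lemma tip_01: "trace_ip n u v = F0 \<or> trace_ip n u v = F1"
proof (induction n)
  case 0 then show ?case by simp
next
  case (Suc n) then show ?case using tterm_01[of "u n" "v n"] by (auto simp: tip_Suc)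
qed

lemma tip_unit: "trace_ip n w (\<lambda>j. if j = i then c else F0) = (if i < n then tterm (w i) c else F0)"
  by (induction n) (auto simp: tip_Suc less_Suc_eq)

lemma vadd_assoc: "vadd (vadd a b) c = vadd a (vadd b c)"
  by (auto simp: vadd_def f4_add_assoc)
lemma vadd_comm: "vadd a b = vadd b a"
  by (auto simp: vadd_def f4_add_comm)
lemma vadd_self[simp]: "vadd a a = zero_vec"
  by (auto simp: vadd_def zero_vec_def)
lemma vadd_zero[simp]: "vadd a zero_vec = a" "vadd zero_vec a = a"
  by (auto simp: vadd_def zero_vec_def f4_add_comm[of F0])
lemma vadd_cancel: "vadd a (vadd a b) = b"
  by (simp add: vadd_assoc[symmetric])
lemma vadd_vecs: "u \<in> vecs n \<Longrightarrow> v \<in> vecs n \<Longrightarrow> vadd u v \<in> vecs n"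
  by (auto simp: vecs_def vadd_def)
lemma zero_vecs[simp]: "zero_vec \<in> vecs n"
  by (auto simp: vecs_def zero_vec_def)

lemma vecs_0: "vecs 0 = {zero_vec}"
  by (auto simp: vecs_def zero_vec_def)

lemma vecs_Suc: "vecs (Suc n) = (\<lambda>(v,c). v(n:=c)) ` (vecs n \<times> UNIV)"
proof
  show "(\<lambda>(v,c). v(n:=c)) ` (vecs n \<times> UNIV) \<subseteq> vecs (Suc n)"
    by (auto simp: vecs_def)
  show "vecs (Suc n) \<subseteq> (\<lambda>(v,c). v(n:=c)) ` (vecs n \<times> UNIV)"
  proof
    fix w assume w: "w \<in> vecs (Suc n)"
    have "w = (\<lambda>(v,c). v(n:=c)) (w(n:=F0), w n)" by auto
    moreover have "(w(n:=F0), w n) \<in> vecs n \<times> UNIV" using w by (auto simp: vecs_def)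
    ultimately show "w \<in> (\<lambda>(v,c). v(n:=c)) ` (vecs n \<times> UNIV)" by blast
  qed
qed

lemma vecs_Suc_inj: "inj_on (\<lambda>(v,c). v(n:=c)) (vecs n \<times> UNIV)"
proof (rule inj_onI, clarify)
  fix v c v' c' assume v: "v \<in> vecs n" "v' \<in> vecs n" and eq: "v(n:=c) = v'(n:=c')"
  from eq have "c = c'" by (metis fun_upd_same)
  moreover have "v = v'"
  proof
    fix i show "v i = v' i"
    proof (cases "i = n")
      case True then show ?thesis using v by (simp add: vecs_def)
    next
      case False then show ?thesis using eq by (metis fun_upd_other)
    qed
  qed
  ultimately show "v = v' \<and> c = c'" by simp
qed

lemma finite_vecs[simp]: "finite (vecs n)"
proof (induction n)
  case 0 then show ?case by (simp add: vecs_0)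
next
  case (Suc n)
  have "finite (UNIV :: f4 set)" by (simp add: UNIV_f4)
  with Suc show ?case by (simp add: vecs_Suc)
qed

lemma weight_le: "weight n v \<le> n"
proof -
  have "{i. i < n \<and> v i \<noteq> F0} \<subseteq> {..<n}" by auto
  then show ?thesis unfolding weight_def using card_mono[of "{..<n}"] by fastforce
qed

lemma weight_Suc: "weight (Suc n) (v(n:=c)) = weight n v + (if c = F0 then 0 else 1)"
proof -
  have "{i. i < Suc n \<and> (v(n:=c)) i \<noteq> F0} = {i. i < n \<and> v i \<noteq> F0} \<union> (if c = F0 then {} else {n})"
    by (auto simp: less_Suc_eq)
  moreover have "finite {i. i < n \<and> v i \<noteq> F0}" by auto
  ultimately show ?thesis unfolding weight_def by auto
qed

lemma vecs_sum_weight: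
  fixes p q :: real
  shows "(\<Sum>v\<in>vecs n. p ^ weight n v * q ^ (n - weight n v)) = (3*p + q) ^ n"
proof (induction n)
  case 0 then show ?case by (simp add: vecs_0 weight_def)
next
  case (Suc n)
  have "(\<Sum>v\<in>vecs (Suc n). p ^ weight (Suc n) v * q ^ (Suc n - weight (Suc n) v))
      = (\<Sum>x\<in>vecs n \<times> UNIV. (\<lambda>v. p ^ weight (Suc n) v * q ^ (Suc n - weight (Suc n) v)) ((\<lambda>(v,c). v(n:=c)) x))"
    unfolding vecs_Suc by (subst sum.reindex[OF vecs_Suc_inj]) (simp add: comp_def)
  also have "\<dots> = (\<Sum>v\<in>vecs n. \<Sum>c\<in>UNIV. p ^ weight (Suc n) (v(n:=c)) * q ^ (Suc n - weight (Suc n) (v(n:=c))))"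
    by (simp add: sum.cartesian_product split_def)
  also have "\<dots> = (\<Sum>v\<in>vecs n. (3*p + q) * (p ^ weight n v * q ^ (n - weight n v)))"
  proof (rule sum.cong[OF refl])
    fix v assume "v \<in> vecs n"
    have le: "weight n v \<le> n" by (rule weight_le)
    then have e: "Suc n - weight n v = Suc (n - weight n v)" by simp
    show "(\<Sum>c\<in>UNIV. p ^ weight (Suc n) (v(n:=c)) * q ^ (Suc n - weight (Suc n) (v(n:=c))))
        = (3*p + q) * (p ^ weight n v * q ^ (n - weight n v))"
      unfolding UNIV_f4 weight_Suc using e by (simp add: algebra_simps)
  qed
  also have "\<dots> = (3*p+q) ^ Suc n" using Suc by (simp add: sum_distrib_left[symmetric])
  finally show ?case .
qed

lemma card_vecs: "card (vecs n) = 4 ^ n"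
proof -
  have "real (card (vecs n)) = (\<Sum>v\<in>vecs n. (1::real) ^ weight n v * 1 ^ (n - weight n v))" by simp
  also have "\<dots> = 4 ^ n" by (subst vecs_sum_weight) simp
  finally show ?thesis by (metis of_nat_eq_of_nat_power_cancel_iff of_nat_numeral)
qed

definition inv_code :: "nat \<Rightarrow> (nat \<Rightarrow> f4) set \<Rightarrow> nat \<Rightarrow> bool" where
  "inv_code n D k \<longleftrightarrow> additive_code n D \<and> self_orthogonal n D \<and> card D = 2^k
     \<and> card (trace_dual n D) = 2^(2*n-k) \<and> trace_dual n (trace_dual n D) = D"

definition ext_code :: "(nat \<Rightarrow> f4) set \<Rightarrow> (nat \<Rightarrow> f4) \<Rightarrow> (nat \<Rightarrow> f4) set" where
  "ext_code D x = D \<union> vadd x ` D"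

lemma dual_sub: "trace_dual n C \<subseteq> vecs n"
  by (auto simp: trace_dual_def)

lemma dual_additive: "additive_code n (trace_dual n C)"
  unfolding additive_code_def trace_dual_def by (auto simp: vadd_vecs tip_addR)

lemma dual_dual_sup: "C \<subseteq> vecs n \<Longrightarrow> C \<subseteq> trace_dual n (trace_dual n C)"
  unfolding trace_dual_def by (auto simp: tip_sym)

lemma additive_finite: "additive_code n C \<Longrightarrow> finite C"
  unfolding additive_code_def using finite_subset finite_vecs by blast

lemma halving:
  assumes E: "additive_code n E" and y: "y \<in> E" and vy: "trace_ip n v y = F1"
  shows "2 * card {z\<in>E. trace_ip n v z = F0} = card E"
proof -
  let ?A = "{z\<in>E. trace_ip n v z = F0}" and ?B = "{z\<in>E. trace_ip n v z = F1}"
  have fin: "finite E" using E by (rule additive_finite)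
  have bij: "bij_betw (\<lambda>z. vadd z y) ?A ?B"
  proof (rule bij_betwI[where g = "\<lambda>z. vadd z y"])
    show "(\<lambda>z. vadd z y) \<in> ?A \<rightarrow> ?B" using E y vy by (auto simp: additive_code_def tip_addR)
    show "(\<lambda>z. vadd z y) \<in> ?B \<rightarrow> ?A" using E y vy by (auto simp: additive_code_def tip_addR)
    show "vadd (vadd z y) y = z" for z by (simp add: vadd_assoc)
    show "vadd (vadd z y) y = z" for z by (simp add: vadd_assoc)
  qed
  have "E = ?A \<union> ?B" using tip_01 by blast
  moreover have "?A \<inter> ?B = {}" by auto
  ultimately have "card E = card ?A + card ?B"
    using fin by (metis (no_types, lifting) card_Un_disjoint finite_Un)
  moreover have "card ?A = card ?B" using bij by (rule bij_betw_same_card)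
  ultimately show ?thesis by simp
qed

lemma exists_sep:
  assumes "trace_dual n (trace_dual n D) = D" "x \<in> vecs n" "x \<notin> D"
  shows "\<exists>y\<in>trace_dual n D. trace_ip n y x = F1"
proof -
  have "x \<notin> trace_dual n (trace_dual n D)" using assms by simp
  then obtain c where c: "c \<in> trace_dual n D" "trace_ip n c x \<noteq> F0"
    using assms(2) unfolding trace_dual_def[of n "trace_dual n D"] by auto
  then show ?thesis using tip_01 by metis
qed

lemma dual_ext:
  assumes D: "additive_code n D" and x: "x \<in> vecs n"
  shows "trace_dual n (ext_code D x) = {z \<in> trace_dual n D. trace_ip n x z = F0}"
proof
  have "x \<in> ext_code D x" using D by (auto simp: ext_code_def additive_code_def intro!: image_eqI[of _ _ zero_vec])
  then show "trace_dual n (ext_code D x) \<subseteq> {z \<in> trace_dual n D. trace_ip n x z = F0}"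
    unfolding trace_dual_def ext_code_def by auto
  show "{z \<in> trace_dual n D. trace_ip n x z = F0} \<subseteq> trace_dual n (ext_code D x)"
    unfolding trace_dual_def ext_code_def by (auto simp: tip_addL)
qed

lemma nonzero_coord: "w \<in> vecs n \<Longrightarrow> w \<noteq> zero_vec \<Longrightarrow> \<exists>i<n. w i \<noteq> F0"
proof (rule ccontr)
  assume w: "w \<in> vecs n" "w \<noteq> zero_vec" "\<not> (\<exists>i<n. w i \<noteq> F0)"
  have "w = zero_vec"
  proof
    fix i show "w i = zero_vec i"
      using w unfolding vecs_def zero_vec_def by (cases "i < n") auto
  qed
  then show False using w by simp
qed

lemma dual_zero: "trace_dual n {zero_vec} = vecs n"
  by (auto simp: trace_dual_def)

lemma dual_vecs: "trace_dual n (vecs n) = {zero_vec}"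
proof
  show "{zero_vec} \<subseteq> trace_dual n (vecs n)" by (auto simp: trace_dual_def)
  show "trace_dual n (vecs n) \<subseteq> {zero_vec}"
  proof
    fix w assume w: "w \<in> trace_dual n (vecs n)"
    show "w \<in> {zero_vec}"
    proof (rule ccontr)
      assume "w \<notin> {zero_vec}"
      moreover have "w \<in> vecs n" using w dual_sub by blast
      ultimately obtain i where i: "i < n" "w i \<noteq> F0" using nonzero_coord by blast
      obtain c where c: "tterm (w i) c = F1" using tterm_nondeg[OF i(2)] by blast
      let ?u = "\<lambda>j. if j = i then c else F0"
      have "?u \<in> vecs n" using i by (auto simp: vecs_def)
      moreover have "trace_ip n ?u w = F1" using tip_unit[of n w i c] i c tip_sym by metis
      ultimately show False using w by (auto simp: trace_dual_def)
    qed
  qed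
qed

lemma inv_base: "inv_code n {zero_vec} 0"
proof -
  have "card (trace_dual n {zero_vec}) = 2^(2*n-0)"
    by (simp add: dual_zero card_vecs power_mult)
  moreover have "trace_dual n (trace_dual n {zero_vec}) = {zero_vec}"
    by (simp add: dual_zero dual_vecs)
  moreover have "self_orthogonal n {zero_vec}"
    by (simp add: self_orthogonal_def dual_zero)
  moreover have "additive_code n {zero_vec}"
    by (simp add: additive_code_def)
  ultimately show ?thesis by (simp add: inv_code_def)
qed

lemma inv_step:
  assumes inv: "inv_code n D k" and x: "x \<in> trace_dual n D" "x \<notin> D"
  shows "inv_code n (ext_code D x) (Suc k)"
proof -
  have D: "additive_code n D" "self_orthogonal n D" "card D = 2^k"
    "card (trace_dual n D) = 2^(2*n-k)" "trace_dual n (trace_dual n D) = D"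
    using inv by (auto simp: inv_code_def)
  have xv: "x \<in> vecs n" using x dual_sub by blast
  have Dv: "D \<subseteq> vecs n" and z: "zero_vec \<in> D" and cl: "\<And>u v. u \<in> D \<Longrightarrow> v \<in> D \<Longrightarrow> vadd u v \<in> D"
    using D(1) by (auto simp: additive_code_def)
  have finD: "finite D" using D(1) additive_finite by blast
  let ?D' = "ext_code D x"
  have add': "additive_code n ?D'"
    unfolding additive_code_def ext_code_def
  proof (intro conjI ballI)
    show "D \<union> vadd x ` D \<subseteq> vecs n" using Dv xv vadd_vecs by auto
    show "zero_vec \<in> D \<union> vadd x ` D" using z by auto
    fix u v assume u: "u \<in> D \<union> vadd x ` D" and v: "v \<in> D \<union> vadd x ` D"
    show "vadd u v \<in> D \<union> vadd x ` D"
    proof -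
      { fix a b assume "a \<in> D" "b \<in> D"
        then have "vadd a b \<in> D" "vadd (vadd x a) b \<in> vadd x ` D" "vadd a (vadd x b) \<in> vadd x ` D"
          "vadd (vadd x a) (vadd x b) \<in> D"
        proof -
          assume a: "a \<in> D" and b: "b \<in> D"
          show "vadd a b \<in> D" using cl a b .
          show "vadd (vadd x a) b \<in> vadd x ` D" using cl[OF a b] by (auto simp: vadd_assoc)
          have "vadd a (vadd x b) = vadd x (vadd a b)" by (metis vadd_assoc vadd_comm)
          then show "vadd a (vadd x b) \<in> vadd x ` D" using cl[OF a b] by auto
          have "vadd (vadd x a) (vadd x b) = vadd a b" by (metis vadd_assoc vadd_comm vadd_cancel)
          then show "vadd (vadd x a) (vadd x b) \<in> D" using cl[OF a b] by simp
        qed }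
      then show ?thesis using u v by blast
    qed
  qed
  have disj: "D \<inter> vadd x ` D = {}"
  proof (rule ccontr)
    assume "D \<inter> vadd x ` D \<noteq> {}"
    then obtain a b where "a \<in> D" "b \<in> D" "vadd x a = b" by auto
    then have "x = vadd b a" by (auto simp: vadd_assoc)
    then show False using x(2) cl \<open>a \<in> D\<close> \<open>b \<in> D\<close> by auto
  qed
  have inj: "inj_on (vadd x) D" by (rule inj_onI) (metis vadd_cancel)
  have card': "card ?D' = 2^Suc k"
    unfolding ext_code_def using card_Un_disjoint[OF finD _ disj] finD card_image[OF inj] D(3) by simp
  have so': "self_orthogonal n ?D'"
    unfolding self_orthogonal_def
  proof
    fix b assume b: "b \<in> ?D'"
    have bv: "b \<in> vecs n" using add' b by (auto simp: additive_code_def)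
    have xd: "\<And>d. d \<in> D \<Longrightarrow> trace_ip n d x = F0" using x(1) by (auto simp: trace_dual_def)
    have dd: "\<And>d e. d \<in> D \<Longrightarrow> e \<in> D \<Longrightarrow> trace_ip n d e = F0"
      using D(2) by (auto simp: self_orthogonal_def trace_dual_def)
    have xx: "trace_ip n x x = F0" by simp
    have "trace_ip n a b = F0" if a: "a \<in> ?D'" for a
    proof -
      have b': "b \<in> D \<or> (\<exists>e\<in>D. b = vadd x e)" using b by (auto simp: ext_code_def)
      have a': "a \<in> D \<or> (\<exists>d\<in>D. a = vadd x d)" using a by (auto simp: ext_code_def)
      have xd2: "\<And>d. d \<in> D \<Longrightarrow> trace_ip n x d = F0" using xd tip_sym by metis
      show ?thesis
        using a' b' by (elim disjE bexE) (simp_all add: tip_addL tip_addR xd xd2 dd)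
    qed
    then have "\<forall>a\<in>?D'. trace_ip n a b = F0" by blast
    then show "b \<in> trace_dual n ?D'" using bv by (auto simp: trace_dual_def)
  qed
  obtain y where y: "y \<in> trace_dual n D" "trace_ip n y x = F1"
    using exists_sep[OF D(5) xv x(2)] by blast
  have yx: "trace_ip n x y = F1" using y(2) tip_sym by metis
  have dual': "trace_dual n ?D' = {z \<in> trace_dual n D. trace_ip n x z = F0}"
    by (rule dual_ext[OF D(1) xv])
  have h: "2 * card (trace_dual n ?D') = 2^(2*n-k)"
    using halving[OF dual_additive y(1) yx] dual' D(4) by simp
  have cd': "card (trace_dual n ?D') = 2^(2*n - Suc k)"
  proof (cases "2*n-k")
    case 0 then show ?thesis using h by simp
  next
    case (Suc m)
    then have "2*n - Suc k = m" by simp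
    then show ?thesis using h Suc by simp
  qed
  have dd': "trace_dual n (trace_dual n ?D') = ?D'"
  proof
    show "?D' \<subseteq> trace_dual n (trace_dual n ?D')"
      using add' dual_dual_sup by (auto simp: additive_code_def)
    show "trace_dual n (trace_dual n ?D') \<subseteq> ?D'"
    proof
      fix w assume w: "w \<in> trace_dual n (trace_dual n ?D')"
      have wv: "w \<in> vecs n" using w dual_sub by blast
      have w0: "\<And>z. z \<in> trace_dual n D \<Longrightarrow> trace_ip n x z = F0 \<Longrightarrow> trace_ip n z w = F0"
        using w dual' by (auto simp: trace_dual_def)
      have w1: "trace_ip n z w = trace_ip n y w" if z: "z \<in> trace_dual n D" "trace_ip n x z = F1" for z
      proof -
        have zy: "vadd z y \<in> trace_dual n D" using dual_additive z(1) y(1) by (auto simp: additive_code_def)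
        have "trace_ip n x (vadd z y) = F0" using z(2) yx by (simp add: tip_addR)
        then have "trace_ip n (vadd z y) w = F0" using w0 zy by blast
        then show ?thesis by (simp add: tip_addL f4_add_eq_F0_iff)
      qed
      show "w \<in> ?D'"
      proof (cases "trace_ip n y w = F0")
        case True
        have "trace_ip n z w = F0" if z: "z \<in> trace_dual n D" for z
        proof (cases "trace_ip n x z = F0")
          case True then show ?thesis using w0 z by blast
        next
          case False then have "trace_ip n x z = F1" using tip_01 by metis
          then show ?thesis using w1[OF z] \<open>trace_ip n y w = F0\<close> by simp
        qed
        then have "w \<in> trace_dual n (trace_dual n D)"
          unfolding trace_dual_def[of n "trace_dual n D"] using wv by blast
        then show ?thesis using D(5) by (simp add: ext_code_def)
      next
        case False
        then have t1: "trace_ip n y w = F1" using tip_01 by metis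
        have "vadd w x \<in> trace_dual n (trace_dual n D)"
          unfolding trace_dual_def[of n "trace_dual n D"]
        proof (intro CollectI conjI ballI)
          show "vadd w x \<in> vecs n" using wv xv vadd_vecs by blast
          fix z assume z: "z \<in> trace_dual n D"
          show "trace_ip n z (vadd w x) = F0"
          proof (cases "trace_ip n x z = F0")
            case True then show ?thesis using w0[OF z True] by (simp add: tip_addR tip_sym[of n z x])
          next
            case False then have "trace_ip n x z = F1" using tip_01 by metis
            then show ?thesis using w1[OF z] t1 by (simp add: tip_addR tip_sym[of n z x])
          qed
        qed
        then have "vadd w x \<in> D" using D(5) by simp
        moreover have "w = vadd x (vadd w x)" by (metis vadd_cancel vadd_comm)
        ultimately show ?thesis by (auto simp: ext_code_def)
      qed
    qed
  qed
  show ?thesis unfolding inv_code_def using add' so' card' cd' dd' by blast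
qed

definition phi :: "nat \<Rightarrow> ((nat \<Rightarrow> f4) \<Rightarrow> real) \<Rightarrow> (nat \<Rightarrow> f4) set \<Rightarrow> real" where
  "phi n f D = (\<Sum>v\<in>trace_dual n D - D. f v)"

lemma finite_dual[simp]: "finite (trace_dual n C)"
  by (rule finite_subset[OF dual_sub finite_vecs])

lemma avg:
  assumes inv: "inv_code n D k" and kn: "k < n" and f: "\<And>v. f v \<ge> 0"
  shows "\<exists>x\<in>trace_dual n D - D. 2 * phi n f (ext_code D x) \<le> phi n f D"
proof -
  have D: "additive_code n D" "self_orthogonal n D" "card D = 2^k"
    "card (trace_dual n D) = 2^(2*n-k)" "trace_dual n (trace_dual n D) = D"
    using inv by (auto simp: inv_code_def)
  have DD: "D \<subseteq> trace_dual n D" using D(2) by (simp add: self_orthogonal_def)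
  define S where "S = trace_dual n D - D"
  have finS: "finite S" unfolding S_def by simp
  have finD: "finite D" using D(1) additive_finite by blast
  have cS: "card S = card (trace_dual n D) - card D"
    unfolding S_def using DD finD by (simp add: card_Diff_subset)
  have "card D < card (trace_dual n D)"
  proof -
    have "k < 2*n-k" using kn by simp
    then have "(2::nat)^k < 2^(2*n-k)" by (rule power_strict_increasing) simp
    then show ?thesis using D by simp
  qed
  then have Sne: "S \<noteq> {}" using cS by auto
  define G where "G x = (\<Sum>v\<in>S. if trace_ip n x v = F0 then f v else 0)" for x
  have phiG: "phi n f (ext_code D x) \<le> G x" if x: "x \<in> S" for x
  proof -
    have xv: "x \<in> vecs n" using x dual_sub unfolding S_def by blast
    have sub: "trace_dual n (ext_code D x) - ext_code D x \<subseteq> {v\<in>S. trace_ip n x v = F0}"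
    proof -
      have "D \<subseteq> ext_code D x" by (auto simp: ext_code_def)
      then show ?thesis unfolding dual_ext[OF D(1) xv] S_def by auto
    qed
    have "phi n f (ext_code D x) \<le> (\<Sum>v\<in>{v\<in>S. trace_ip n x v = F0}. f v)"
      unfolding phi_def by (rule sum_mono2) (use finS sub f in auto)
    also have "\<dots> = G x" unfolding G_def by (simp add: sum.inter_filter finS)
    finally show ?thesis .
  qed
  have cnt: "2 * card {x\<in>S. trace_ip n x v = F0} \<le> card S" if v: "v \<in> S" for v
  proof -
    have vv: "v \<in> vecs n" "v \<notin> D" "v \<in> trace_dual n D" using v dual_sub unfolding S_def by auto
    obtain y where y: "y \<in> trace_dual n D" "trace_ip n y v = F1"
      using exists_sep[OF D(5) vv(1,2)] by blast
    have yv: "trace_ip n v y = F1" using y(2) tip_sym by metis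
    define A where "A = {z\<in>trace_dual n D. trace_ip n v z = F0}"
    have hA: "2 * card A = card (trace_dual n D)" unfolding A_def by (rule halving[OF dual_additive y(1) yv])
    have DA: "D \<subseteq> A"
    proof
      fix d assume d: "d \<in> D"
      have "trace_ip n d v = F0" using vv(3) d by (auto simp: trace_dual_def)
      then have "trace_ip n v d = F0" by (simp add: tip_sym)
      then show "d \<in> A" unfolding A_def using DD d by blast
    qed
    have eq: "{x\<in>S. trace_ip n x v = F0} = A - D"
    proof -
      have "\<And>x. trace_ip n x v = trace_ip n v x" by (rule tip_sym)
      then show ?thesis unfolding A_def S_def by auto
    qed
    have "card (A - D) = card A - card D"
      using DA finD by (simp add: card_Diff_subset)
    then show ?thesis using eq cS hA by simp
  qed
  have sumG: "(\<Sum>x\<in>S. G x) = (\<Sum>v\<in>S. f v * card {x\<in>S. trace_ip n x v = F0})"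
  proof -
    have "(\<Sum>x\<in>S. G x) = (\<Sum>v\<in>S. \<Sum>x\<in>S. if trace_ip n x v = F0 then f v else 0)"
      unfolding G_def by (rule sum.swap)
    also have "\<dots> = (\<Sum>v\<in>S. f v * card {x\<in>S. trace_ip n x v = F0})"
      by (rule sum.cong[OF refl]) (simp add: sum.inter_filter[symmetric] finS)
    finally show ?thesis .
  qed
  also have "\<dots> \<le> (\<Sum>v\<in>S. f v * (card S / 2))"
  proof (rule sum_mono)
    fix v assume "v \<in> S"
    then have "real (card {x\<in>S. trace_ip n x v = F0}) \<le> card S / 2" using cnt by fastforce
    then show "f v * real (card {x\<in>S. trace_ip n x v = F0}) \<le> f v * (card S / 2)"
      by (rule mult_left_mono) (rule f)
  qed
  also have "\<dots> = card S * (phi n f D / 2)"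
    unfolding phi_def S_def[symmetric] by (simp add: sum_distrib_right[symmetric] sum_divide_distrib[symmetric])
  finally have le: "(\<Sum>x\<in>S. G x) \<le> card S * (phi n f D / 2)" .
  have "\<exists>x\<in>S. G x \<le> phi n f D / 2"
  proof (rule ccontr)
    assume "\<not> ?thesis"
    then have "\<And>x. x \<in> S \<Longrightarrow> phi n f D / 2 < G x" by auto
    then have "(\<Sum>x\<in>S. phi n f D / 2) < (\<Sum>x\<in>S. G x)"
      using finS Sne by (intro sum_strict_mono) auto
    then show False using le by simp
  qed
  then obtain x where "x \<in> S" "G x \<le> phi n f D / 2" by blast
  then show ?thesis using phiG[of x] unfolding S_def by force
qed

lemma chain:
  assumes f: "\<And>v. f v \<ge> 0" and kn: "k \<le> n"
  shows "\<exists>D. (\<forall>j\<le>k. inv_code n (D j) j \<and> 2^j * phi n f (D j) \<le> phi n f {zero_vec})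
           \<and> (\<forall>i j. i \<le> j \<longrightarrow> j \<le> k \<longrightarrow> D i \<subseteq> D j)"
  using kn
proof (induction k)
  case 0
  show ?case by (rule exI[of _ "\<lambda>_. {zero_vec}"]) (simp add: inv_base)
next
  case (Suc k)
  then obtain D where D: "\<forall>j\<le>k. inv_code n (D j) j \<and> 2^j * phi n f (D j) \<le> phi n f {zero_vec}"
    "\<forall>i j. i \<le> j \<longrightarrow> j \<le> k \<longrightarrow> D i \<subseteq> D j" by auto
  have ik: "inv_code n (D k) k" and pk: "2^k * phi n f (D k) \<le> phi n f {zero_vec}" using D(1) by auto
  have kn: "k < n" using Suc.prems by simp
  obtain x where x: "x \<in> trace_dual n (D k) - D k" "2 * phi n f (ext_code (D k) x) \<le> phi n f (D k)"
    using avg[where f=f, OF ik kn f] by blast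
  define D' where "D' = D(Suc k := ext_code (D k) x)"
  have "inv_code n (D' (Suc k)) (Suc k)" unfolding D'_def using inv_step[OF ik] x(1) by simp
  moreover have "2^Suc k * phi n f (D' (Suc k)) \<le> phi n f {zero_vec}"
  proof -
    have "2^Suc k * phi n f (D' (Suc k)) = 2^k * (2 * phi n f (ext_code (D k) x))"
      unfolding D'_def by simp
    also have "\<dots> \<le> 2^k * phi n f (D k)" using x(2) by (intro mult_left_mono) auto
    finally show ?thesis using pk by linarith
  qed
  ultimately have A: "\<forall>j\<le>Suc k. inv_code n (D' j) j \<and> 2^j * phi n f (D' j) \<le> phi n f {zero_vec}"
    using D(1) unfolding D'_def by (auto simp: le_Suc_eq)
  have B: "\<forall>i j. i \<le> j \<longrightarrow> j \<le> Suc k \<longrightarrow> D' i \<subseteq> D' j"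
  proof (intro allI impI)
    fix i j assume ij: "i \<le> j" "j \<le> Suc k"
    show "D' i \<subseteq> D' j"
    proof (cases "j = Suc k")
      case True
      show ?thesis
      proof (cases "i = Suc k")
        case True then show ?thesis using \<open>j = Suc k\<close> by simp
      next
        case False
        then have "D i \<subseteq> D k" using D(2) ij True by auto
        then show ?thesis using True False unfolding D'_def ext_code_def by auto
      qed
    next
      case False then show ?thesis using D(2) ij unfolding D'_def by auto
    qed
  qed
  show ?case using A B by blast
qed

lemma H4_lim0: "(H4 \<longlongrightarrow> 0) (at_right 0)"
  unfolding H4_def log_def by real_asymp

lemma H4_34: "H4 (3/4) = 1"
  unfolding H4_def log_def by (simp add: ln_div)

lemma aux_div: "- ((a + 1) / L) - (- b - 1) / L = b / L - a / (L::real)"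
  by (cases "L = 0") (simp_all add: field_simps)

lemma H4_deriv:
  assumes "0 < x" "x < 1"
  shows "(H4 has_real_derivative (log 4 (1-x) - log 4 (x/3))) (at x)"
proof -
  have L: "ln (4::real) > 0" by simp
  have "((\<lambda>x. - x * (ln (x/3) / ln 4) - (1 - x) * (ln (1-x) / ln 4)) has_real_derivative
     (log 4 (1-x) - log 4 (x/3))) (at x)"
    using assms L by (auto intro!: derivative_eq_intros simp: log_def aux_div)
  then show ?thesis unfolding H4_def log_def by simp
qed

lemma H4_cont: "0 < a \<Longrightarrow> b < 1 \<Longrightarrow> continuous_on {a..b} H4"
  unfolding H4_def log_def by (intro continuous_intros) auto

lemma H4_strict_mono:
  assumes "0 < a" "a < b" "b \<le> 3/4"
  shows "H4 a < H4 b"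
proof (rule DERIV_pos_imp_increasing_open[OF assms(2)])
  fix x assume x: "a < x" "x < b"
  have "log 4 (x/3) < log 4 (1-x)" using x assms by (subst log_less_cancel_iff) auto
  then show "\<exists>y. (H4 has_real_derivative y) (at x) \<and> 0 < y"
    using H4_deriv[of x] x assms by auto
next
  show "continuous_on {a..b} H4" using assms by (intro H4_cont) auto
qed

lemma H4_inv_props:
  assumes "0 < y" "y < 1"
  shows "0 < H4_inv y \<and> H4_inv y \<le> 3/4 \<and> H4 (H4_inv y) = y"
proof -
  have "eventually (\<lambda>x. H4 x < y) (at_right 0)"
    using H4_lim0 assms(1) by (rule order_tendstoD)
  then obtain b where b: "b > 0" "\<And>x. 0 < x \<Longrightarrow> x < b \<Longrightarrow> H4 x < y"
    unfolding eventually_at_right[OF zero_less_one] by auto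
  define a where "a = min (b/2) (1/2)"
  have a: "0 < a" "a < 3/4" "H4 a < y" using b unfolding a_def by auto
  obtain x where x: "a \<le> x" "x \<le> 3/4" "H4 x = y"
    using IVT'[of H4 a y "3/4"] a H4_34 assms H4_cont[of a "3/4"] by auto
  have ex: "\<exists>!x. 0 < x \<and> x \<le> 3/4 \<and> H4 x = y"
  proof (rule ex1I[of _ x])
    show "0 < x \<and> x \<le> 3/4 \<and> H4 x = y" using x a by auto
    fix z assume z: "0 < z \<and> z \<le> 3/4 \<and> H4 z = y"
    show "z = x"
    proof (rule ccontr)
      assume "z \<noteq> x"
      then consider "z < x" | "x < z" by linarith
      then show False
        using H4_strict_mono[of z x] H4_strict_mono[of x z] z x a by (cases; auto)
    qed
  qed
  show ?thesis unfolding H4_inv_def using theI'[OF ex] by simp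
qed

lemma ball_bound:
  assumes l: "0 < l" "l \<le> 3/4"
  shows "real (card {v\<in>vecs n. real (weight n v) < l * real n}) \<le> 4 powr (real n * H4 l)"
proof -
  define p where "p = l/3"
  define q where "q = 1 - l"
  have pq: "0 < p" "0 < q" "p \<le> q" using l unfolding p_def q_def by auto
  define B where "B = {v\<in>vecs n. real (weight n v) < l * real n}"
  define K where "K = exp (l * n * ln p + (1-l) * n * ln q)"
  have K: "K = 4 powr (- (real n * H4 l))"
    unfolding K_def H4_def p_def q_def powr_def log_def by (simp add: algebra_simps) (simp add: divide_simps)
  have Kpos: "K > 0" unfolding K_def by simp
  have low: "K \<le> p ^ weight n v * q ^ (n - weight n v)" if v: "v \<in> B" for v
  proof -
    define w where "w = weight n v"
    have wn: "w \<le> n" unfolding w_def by (rule weight_le)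
    have wl: "real w \<le> l * n" using v unfolding B_def w_def by auto
    have e: "p ^ w * q ^ (n - w) = exp (w * ln p + (n - w) * ln q)"
    proof -
      have "p ^ w = exp (real w * ln p)" using pq by (simp add: exp_of_nat_mult)
      moreover have "q ^ (n - w) = exp (real (n - w) * ln q)" using pq by (simp add: exp_of_nat_mult)
      ultimately show ?thesis using wn by (simp add: exp_add[symmetric] of_nat_diff)
    qed
    have "ln p \<le> ln q" using pq by simp
    then have "0 \<le> (l * n - w) * (ln q - ln p)" using wl by (intro mult_nonneg_nonneg) auto
    then have "l * n * ln p + (1-l) * n * ln q \<le> w * ln p + (real n - w) * ln q"
      by (simp add: algebra_simps)
    then show ?thesis unfolding K_def w_def[symmetric] e using wn by (simp add: of_nat_diff)
  qed
  have "real (card B) * K = (\<Sum>v\<in>B. K)" by simp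
  also have "\<dots> \<le> (\<Sum>v\<in>B. p ^ weight n v * q ^ (n - weight n v))"
    using low by (rule sum_mono)
  also have "\<dots> \<le> (\<Sum>v\<in>vecs n. p ^ weight n v * q ^ (n - weight n v))"
    by (rule sum_mono2) (use pq in \<open>auto simp: B_def\<close>)
  also have "\<dots> = 1" unfolding vecs_sum_weight p_def q_def by simp
  finally have "real (card B) \<le> 1 / K" using Kpos by (simp add: field_simps)
  also have "1 / K = 4 powr (real n * H4 l)" unfolding K by (simp add: powr_minus divide_inverse)
  finally show ?thesis unfolding B_def .
qed

lemma eventually_gap:
  fixes g c :: real
  assumes "g > 0" "c \<ge> 1"
  shows "\<exists>N::nat. \<forall>n\<ge>N. c < 2 powr (real n * g)"
proof -
  define N where "N = nat \<lceil>(log 2 c + 1) / g\<rceil>"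
  have "c < 2 powr (real n * g)" if n: "n \<ge> N" for n
  proof -
    have "(log 2 c + 1) / g \<le> real N" unfolding N_def by linarith
    also have "\<dots> \<le> real n" using n by simp
    finally have "log 2 c + 1 \<le> real n * g" using assms(1) by (simp add: field_simps)
    then have "log 2 c < real n * g" by linarith
    then have "2 powr (log 2 c) < 2 powr (real n * g)" by simp
    then show ?thesis using assms(2) by simp
  qed
  then show ?thesis by blast
qed

theorem lemma1:
  fixes s :: nat and r :: "nat \<Rightarrow> real" and \<epsilon> :: real
  assumes "s \<ge> 1"
    and "0 < r 1" and "r s < 1"
    and "\<And>i j. 1 \<le> i \<Longrightarrow> i < j \<Longrightarrow> j \<le> s \<Longrightarrow> r i < r j"
    and "\<epsilon> > 0"
  shows "\<exists>n0::nat. \<forall>n\<ge>n0. (\<forall>i\<in>{1..s}. r i * real n \<in> \<int>) \<longrightarrow>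
    (\<exists>C :: nat \<Rightarrow> (nat \<Rightarrow> f4) set.
       (\<forall>i\<in>{1..s}. additive_code n (C i) \<and> self_orthogonal n (C i)
          \<and> real (card (C i)) = 2 powr (real n - r i * real n)
          \<and> (\<forall>v\<in>trace_dual n (C i) - C i.
               real (weight n v) \<ge> (H4_inv ((1 - r i) / 2) - \<epsilon>) * real n))
     \<and> (\<forall>i j. 1 \<le> i \<longrightarrow> i \<le> j \<longrightarrow> j \<le> s \<longrightarrow> C j \<subseteq> C i))"
proof -
  have rmono: "r i \<le> r j" if "1 \<le> i" "i \<le> j" "j \<le> s" for i j
    using assms(4)[of i j] that by (cases "i = j") auto
  have rb: "0 < r i \<and> r i < 1" if "i \<in> {1..s}" for i
    using rmono[of 1 i] rmono[of i s] that assms(2,3) by auto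
  define L where "L i = H4_inv ((1 - r i) / 2) - \<epsilon>" for i
  have dprops: "0 < H4_inv ((1 - r i) / 2) \<and> H4_inv ((1 - r i) / 2) \<le> 3/4
      \<and> H4 (H4_inv ((1 - r i) / 2)) = (1 - r i) / 2" if "i \<in> {1..s}" for i
    using H4_inv_props[of "(1 - r i) / 2"] rb[OF that] by auto
  have Lprops: "L i < 3/4 \<and> H4 (L i) < (1 - r i) / 2" if i: "i \<in> {1..s}" "L i > 0" for i
  proof -
    have "L i < H4_inv ((1 - r i) / 2)" unfolding L_def using assms(5) by simp
    then show ?thesis using H4_strict_mono[of "L i" "H4_inv ((1 - r i) / 2)"] dprops[OF i(1)] i(2) by auto
  qed
  define P where "P i n \<longleftrightarrow> L i \<le> 0 \<or> real s * 4 powr (real n * H4 (L i)) < 2 powr (real n * (1 - r i))" for i n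
  have evP: "eventually (\<lambda>n. P i n) sequentially" if i: "i \<in> {1..s}" for i
  proof (cases "L i \<le> 0")
    case True then show ?thesis unfolding P_def by simp
  next
    case False
    define g where "g = (1 - r i) - 2 * H4 (L i)"
    have g: "g > 0" using Lprops[OF i] False unfolding g_def by auto
    obtain N :: nat where N: "\<And>n. n \<ge> N \<Longrightarrow> real s < 2 powr (real n * g)"
    proof -
      have "real s \<ge> 1" using assms(1) by simp
      from eventually_gap[OF g this] show ?thesis using that by blast
    qed
    have "P i n" if n: "n \<ge> N" for n
    proof -
      have e1: "4 powr (real n * H4 (L i)) = 2 powr (2 * real n * H4 (L i))"
        by (simp add: powr_powr[symmetric])
      have e2: "2 powr (real n * (1 - r i)) = 2 powr (2 * real n * H4 (L i)) * 2 powr (real n * g)"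
        unfolding g_def by (simp add: powr_add[symmetric] algebra_simps)
      have "real s * 2 powr (2 * real n * H4 (L i)) < 2 powr (real n * g) * 2 powr (2 * real n * H4 (L i))"
        using N[OF n] by (intro mult_strict_right_mono) auto
      then show ?thesis unfolding P_def e1 e2 by (simp add: algebra_simps)
    qed
    then show ?thesis unfolding eventually_sequentially by blast
  qed
  have "eventually (\<lambda>n. \<forall>i\<in>{1..s}. P i n) sequentially"
    by (rule eventually_ball_finite) (use evP in auto)
  then obtain n0 where n0: "\<And>n. n \<ge> n0 \<Longrightarrow> \<forall>i\<in>{1..s}. P i n"
    unfolding eventually_sequentially by blast
  show ?thesis
  proof (rule exI[of _ n0], intro allI impI)
    fix n assume n: "n \<ge> n0" and integ: "\<forall>i\<in>{1..s}. r i * real n \<in> \<int>"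
    have Pn: "\<And>i. i \<in> {1..s} \<Longrightarrow> P i n" using n0[OF n] by blast
    define m where "m i = nat \<lfloor>real n - r i * real n\<rfloor>" for i
    have mreal: "real (m i) = real n - r i * real n" if i: "i \<in> {1..s}" for i
    proof -
      obtain k where k: "r i * real n = of_int k" using integ i Ints_cases by metis
      have "r i * real n \<le> 1 * real n" using rb[OF i] by (intro mult_right_mono) auto
      then have "0 \<le> real n - r i * real n" by simp
      then show ?thesis unfolding m_def k by (simp add: floor_diff_of_int)
    qed
    have mn: "m i \<le> n" if i: "i \<in> {1..s}" for i
    proof -
      have "real (m i) \<le> real n" using mreal[OF i] rb[OF i] by simp
      then show ?thesis by simp
    qed
    define f where "f v = (\<Sum>i\<in>{1..s}. if real (weight n v) < L i * real n then 1 / 2 ^ m i else (0::real))" for v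
    have fnn: "\<And>v. f v \<ge> 0" unfolding f_def by (intro sum_nonneg) auto
    obtain D where D: "\<forall>j\<le>n. inv_code n (D j) j \<and> 2^j * phi n f (D j) \<le> phi n f {zero_vec}"
      "\<forall>i j. i \<le> j \<longrightarrow> j \<le> n \<longrightarrow> D i \<subseteq> D j"
      using chain[where f=f, OF fnn order_refl] by blast
    define B where "B i = {v\<in>vecs n. real (weight n v) < L i * real n}" for i
    have termlt: "real (card (B i)) / 2 ^ m i < 1 / real s" if i: "i \<in> {1..s}" for i
    proof (cases "L i \<le> 0")
      case True
      then have "B i = {}" unfolding B_def using mult_right_mono[OF True, of "real n"] by force
      then show ?thesis using assms(1) by simp
    next
      case False
      have Lp: "L i < 3/4" using Lprops[OF i] False by auto
      have cb: "real (card (B i)) \<le> 4 powr (real n * H4 (L i))"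
        unfolding B_def using ball_bound[of "L i" n] Lp False by auto
      have "real s * 4 powr (real n * H4 (L i)) < 2 powr (real n * (1 - r i))"
        using Pn[OF i] False unfolding P_def by auto
      also have "2 powr (real n * (1 - r i)) = 2 ^ m i"
      proof -
        have "real n * (1 - r i) = real (m i)" using mreal[OF i] by (simp add: algebra_simps)
        then show ?thesis by (simp add: powr_realpow[symmetric])
      qed
      finally have "real s * real (card (B i)) < 2 ^ m i"
        using cb assms(1) by (smt (verit) mult_left_mono of_nat_0_le_iff)
      then show ?thesis using assms(1) by (simp add: field_simps)
    qed
    have phi0: "phi n f {zero_vec} < 1"
    proof -
      have "phi n f {zero_vec} \<le> (\<Sum>v\<in>vecs n. f v)"
        unfolding phi_def dual_zero by (rule sum_mono2) (use fnn in auto)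
      also have "\<dots> = (\<Sum>i\<in>{1..s}. \<Sum>v\<in>vecs n. if real (weight n v) < L i * real n then 1 / 2 ^ m i else 0)"
        unfolding f_def by (rule sum.swap)
      also have "\<dots> = (\<Sum>i\<in>{1..s}. real (card (B i)) / 2 ^ m i)"
        unfolding B_def by (rule sum.cong[OF refl]) (simp add: sum.inter_filter[symmetric])
      also have "\<dots> < (\<Sum>i\<in>{1..s}. 1 / real s)"
        using termlt assms(1) by (intro sum_strict_mono) auto
      also have "\<dots> = 1" using assms(1) by simp
      finally show ?thesis .
    qed
    define C where "C i = D (m i)" for i
    have props: "additive_code n (C i) \<and> self_orthogonal n (C i)
          \<and> real (card (C i)) = 2 powr (real n - r i * real n)
          \<and> (\<forall>v\<in>trace_dual n (C i) - C i.
               real (weight n v) \<ge> (H4_inv ((1 - r i) / 2) - \<epsilon>) * real n)" if i: "i \<in> {1..s}" for i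
    proof -
      have inv: "inv_code n (C i) (m i)" and ph: "2 ^ m i * phi n f (C i) \<le> phi n f {zero_vec}"
        using D(1) mn[OF i] unfolding C_def by auto
      have card: "real (card (C i)) = 2 powr (real n - r i * real n)"
        using inv mreal[OF i] by (simp add: inv_code_def powr_realpow[symmetric])
      have wt: "real (weight n v) \<ge> L i * real n" if v: "v \<in> trace_dual n (C i) - C i" for v
      proof (rule ccontr)
        assume bad: "\<not> ?thesis"
        have "1 / 2 ^ m i \<le> f v"
        proof -
          have "1 / 2 ^ m i = (\<lambda>j. if real (weight n v) < L j * real n then 1 / 2 ^ m j else (0::real)) i"
            using bad by simp
          also have "\<dots> \<le> f v" unfolding f_def
            by (rule member_le_sum) (use i in auto)
          finally show ?thesis .
        qed
        also have "f v \<le> phi n f (C i)" unfolding phi_def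
          by (rule member_le_sum) (use v fnn in auto)
        finally have "2 ^ m i * (1 / 2 ^ m i) \<le> 2 ^ m i * phi n f (C i)"
          by (intro mult_left_mono) auto
        then have "1 \<le> phi n f {zero_vec}" using ph by simp
        then show False using phi0 by simp
      qed
      show ?thesis using inv card wt unfolding inv_code_def L_def by auto
    qed
    have nest: "C j \<subseteq> C i" if "1 \<le> i" "i \<le> j" "j \<le> s" for i j
    proof -
      have "real (m j) \<le> real (m i)"
        using mreal[of i] mreal[of j] rmono[OF that] that by (simp add: mult_right_mono)
      then have "m j \<le> m i" by simp
      then show ?thesis unfolding C_def using D(2) mn[of i] that by auto
    qed
    show "\<exists>C :: nat \<Rightarrow> (nat \<Rightarrow> f4) set.
       (\<forall>i\<in>{1..s}. additive_code n (C i) \<and> self_orthogonal n (C i)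
          \<and> real (card (C i)) = 2 powr (real n - r i * real n)
          \<and> (\<forall>v\<in>trace_dual n (C i) - C i.
               real (weight n v) \<ge> (H4_inv ((1 - r i) / 2) - \<epsilon>) * real n))
     \<and> (\<forall>i j. 1 \<le> i \<longrightarrow> i \<le> j \<longrightarrow> j \<le> s \<longrightarrow> C j \<subseteq> C i)"
      using props nest by blast
  qed
qed

end
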